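(* Let $0<r_j<\infty$, $0<s_j<\infty$ for $j=1,\dots,n$, let $\mathbf{u}_1,\mathbf{u}_2\in\mathbb{C}^n$, and let $\rho=W(\mathbf{u}_1)\gamma(\mathbf{r})W(\mathbf{u}_1)^\dagger$ and $\sigma=W(\mathbf{u}_2)\gamma(\mathbf{s})W(\mathbf{u}_2)^\dagger$, where $\gamma(\mathbf{r})=\otimes_{j}\gamma(r_j)$, $\gamma(\mathbf{s})=\otimes_j\gamma(s_j)$. Let $\alpha>1$ and let $V_{\sigma(\alpha-1)}$ and $V_{\rho(\alpha)}$ denote the covariance matrices of the gaussian states $\sigma^{\alpha-1}/\operatorname{tr}\sigma^{\alpha-1}$ and $\rho^\alpha/\operatorname{tr}\rho^\alpha$ respectively. If $D_\alpha(\rho\|\sigma)<\infty$, then $V_{\sigma(\alpha-1)}>V_{\rho(\alpha)}$.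
   Context: One-mode Fock space: $\ell^2(\mathbb{Z}_{\ge 0})$ with orthonormal particle basis $\{|k\rangle\}$; $n$-mode space is the $n$-fold tensor product. For $0<s<\infty$, $\gamma(s)=(1-e^{-s})\sum_{k\ge0}e^{-ks}|k\rangle\langle k|$. For $u\in\mathbb{C}$, $|e(v)\rangle=\sum_k\frac{v^k}{\sqrt{k!}}|k\rangle$ and $W(u)$ is the unitary with $W(u)|e(v)\rangle=\exp(-\tfrac12|u|^2-\bar uv)|e(u+v)\rangle$; $W(\mathbf{u})=W(u_1)\otimes\cdots\otimes W(u_n)$. For $\beta>0$, $\gamma(\mathbf{s})^\beta/\operatorname{tr}\gamma(\mathbf{s})^\beta=\gamma(\beta\mathbf{s})$, and the covariance matrix of $\gamma(\mathbf{s})$ (and of any displacement $W(\mathbf{u})\gamma(\mathbf{s})W(\mathbf{u})^\dagger$) is the $2n\times2n$ matrix $\frac12\operatorname{diag}(\coth\frac{s_1}{2},\dots,\coth\frac{s_n}{2})\otimes I_2$. For real symmetric matrices, $A>B$ means $A-B$ is positive definite. For states $\rho=\sum_i p_i|x_i\rangle\langle x_i|$, $\sigma=\sum_j q_j|y_j\rangle\langle y_j|$ (spectral decompositions), $D_\alpha(\rho\|\sigma)=\frac{1}{\alpha-1}\log\sum_{i,j}p_i^\alpha q_j^{1-\alpha}|\langle x_i|y_j\rangle|^2$ for $\alpha\in(0,1)\cup(1,\infty)$, with conventions $0^{1-\alpha}=\infty$ ($\alpha>1$) and $0\cdot\infty=0$. *)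

theory Defs
  imports "HOL-Analysis.Analysis"
begin

text \<open>Vectors in Fock space are represented by their coefficient functions with respect
  to the particle (number) basis; for n modes indexed by a finite type 'n, the basis is indexed
  by multi-indices 'n \<Rightarrow> nat.\<close>

definition ip :: "('h \<Rightarrow> complex) \<Rightarrow> ('h \<Rightarrow> complex) \<Rightarrow> complex" where
  "ip x y = infsum (\<lambda>l. cnj (x l) * y l) UNIV"

text \<open>Matrix elements of the one-mode Weyl operator W(u) in the particle basis:
  weyl_elem u k m = <k| W(u) |m>.  They are determined by the defining relation
  W(u)|e(v)> = exp(-|u|^2/2 - conj(u) v) |e(u+v)>, read off componentwise.\<close>

definition weyl_elem :: "complex \<Rightarrow> nat \<Rightarrow> nat \<Rightarrow> complex" where
  "weyl_elem u = (THE w. \<forall>k v.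
      (\<lambda>m. w k m * v ^ m / complex_of_real (sqrt (fact m))) sums
      (exp (- complex_of_real ((cmod u)\<^sup>2 / 2) - cnj u * v) * (u + v) ^ k
         / complex_of_real (sqrt (fact k))))"

text \<open>The vector W(\<u>)|\<k>> for a multi-index \<k>, as coefficient function.\<close>

definition displaced_basis :: "('n::finite \<Rightarrow> complex) \<Rightarrow> ('n \<Rightarrow> nat) \<Rightarrow> ('n \<Rightarrow> nat) \<Rightarrow> complex" where
  "displaced_basis u k = (\<lambda>l. \<Prod>j\<in>UNIV. weyl_elem (u j) (l j) (k j))"

text \<open>Eigenvalues of gamma(\<s>) = tensor product of gamma(s_j) on |\<k>>.\<close>

definition thermal_eig :: "('n::finite \<Rightarrow> real) \<Rightarrow> ('n \<Rightarrow> nat) \<Rightarrow> real" where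
  "thermal_eig s k = (\<Prod>j\<in>UNIV. (1 - exp (- s j)) * exp (- real (k j) * s j))"

text \<open>Renyi divergence D_alpha as in the paper from spectral decompositions
  rho = sum_i p_i |x_i><x_i|, sigma = sum_j q_j |y_j><y_j|, with conventions
  0^(1-alpha) = infinity for alpha > 1 and 0 * infinity = 0 (ennreal arithmetic).\<close>

definition neg_pow_term :: "real \<Rightarrow> real \<Rightarrow> ennreal" where
  "neg_pow_term \<alpha> q = (if q = 0 then (if \<alpha> > 1 then top else 0) else ennreal (q powr (1 - \<alpha>)))"

definition renyi_div :: "real \<Rightarrow> ('i \<Rightarrow> real) \<Rightarrow> ('i \<Rightarrow> 'h \<Rightarrow> complex)
    \<Rightarrow> ('j \<Rightarrow> real) \<Rightarrow> ('j \<Rightarrow> 'h \<Rightarrow> complex) \<Rightarrow> ereal" where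
  "renyi_div \<alpha> p x q y =
     (let S = infsum (\<lambda>(i, j). ennreal (p i powr \<alpha>) * neg_pow_term \<alpha> (q j)
                        * ennreal ((cmod (ip (x i) (y j)))\<^sup>2)) UNIV
      in if S = top then PInfty
         else if S = 0 then (if \<alpha> > 1 then MInfty else PInfty)
         else ereal (ln (enn2real S) / (\<alpha> - 1)))"

definition coth :: "real \<Rightarrow> real" where
  "coth x = cosh x / sinh x"

text \<open>Covariance matrix (2n x 2n, rows/columns indexed by 'n \<times> bool) of gamma(\<s>) and of any
  displacement of it: (1/2) diag(coth(s_1/2),...,coth(s_n/2)) \<otimes> I_2.\<close>

definition cov_thermal :: "('n::finite \<Rightarrow> real) \<Rightarrow> ('n \<times> bool) \<Rightarrow> ('n \<times> bool) \<Rightarrow> real" where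
  "cov_thermal s = (\<lambda>(j, a) (k, b). if j = k \<and> a = b then coth (s j / 2) / 2 else 0)"

definition pos_def :: "('a::finite \<Rightarrow> 'a \<Rightarrow> real) \<Rightarrow> bool" where
  "pos_def A \<longleftrightarrow> (\<forall>x::'a \<Rightarrow> real. (\<exists>i. x i \<noteq> 0) \<longrightarrow> (\<Sum>i\<in>UNIV. \<Sum>k\<in>UNIV. x i * A i k * x k) > 0)"

end

theory Submission
  imports Defs
begin

definition kap :: "nat \<Rightarrow> nat \<Rightarrow> nat \<Rightarrow> real" where
 "kap l j p = sqrt (fact l * fact j) / (fact (l-p) * fact (j-p) * fact p)"

definition TT :: "'a::{real_normed_field,banach} \<Rightarrow> 'a \<Rightarrow> nat \<Rightarrow> nat \<Rightarrow> 'a" where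
 "TT x y l j = (\<Sum>p\<le>min l j. of_real (kap l j p) * x^(l-p) * y^(j-p))"

lemma exp_shift_sums:
  fixes z c :: "'a::{real_normed_field,banach}"
  shows "(\<lambda>j. if p \<le> j then c * (z^(j-p) / of_real (fact (j-p))) else 0) sums (c * exp z)"
proof -
  have "(\<lambda>n. z^n /\<^sub>R fact n) sums exp z" by (rule exp_converges)
  hence "(\<lambda>n. c * (z^n / of_real (fact n))) sums (c * exp z)"
    by (intro sums_mult) (simp add: scaleR_conv_of_real divide_inverse mult.commute)
  hence "(\<lambda>i. (\<lambda>j. if p \<le> j then c * (z^(j-p) / of_real (fact (j-p))) else 0) (i + p)) sums (c * exp z)"
    by simp
  thus ?thesis by (subst (asm) sums_iff_shift) simp
qed

lemma sqrt_fact_div: "real (fact l) / sqrt (fact l) = sqrt (fact l)"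
  by (simp add: real_div_sqrt)

lemma TT_gen:
  fixes x y v :: "'a::{real_normed_field,banach}"
  shows "(\<lambda>j. TT x y l j * v^j / of_real (sqrt (fact j))) sums (exp (y * v) * (x+v)^l / of_real (sqrt (fact l)))"
proof -
  define c where "c p = of_real (sqrt (fact l) / (fact (l-p) * fact p)) * x^(l-p) * v^p" for p
  have "(\<lambda>j. \<Sum>p\<le>l. if p \<le> j then c p * ((y * v)^(j-p) / of_real (fact (j-p))) else 0) sums (\<Sum>p\<le>l. c p * exp (y * v))"
    by (intro sums_sum exp_shift_sums)
  moreover have "(\<Sum>p\<le>l. c p * exp (y * v)) = exp (y * v) * (x+v)^l / of_real (sqrt (fact l))"
  proof -
    have "(x+v)^l = (\<Sum>p\<le>l. of_nat (l choose p) * v^p * x^(l-p))"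
      by (subst add.commute) (rule binomial_ring)
    also have "\<dots> / of_real (sqrt (fact l)) = (\<Sum>p\<le>l. c p)"
      unfolding sum_divide_distrib
    proof (rule sum.cong[OF refl])
      fix p assume "p \<in> {..l}"
      hence pl: "p \<le> l" by simp
      have "real (l choose p) / sqrt (fact l) = sqrt (fact l) / (fact (l-p) * fact p)"
        using pl by (simp add: binomial_fact field_simps real_div_sqrt)
      hence "(of_nat (l choose p) :: 'a) / of_real (sqrt (fact l)) = of_real (sqrt (fact l) / (fact (l-p) * fact p))"
        by (metis of_real_divide of_real_of_nat_eq)
      thus "of_nat (l choose p) * v ^ p * x ^ (l - p) / of_real (sqrt (fact l)) = c p"
        unfolding c_def by (simp add: field_simps)
    qed
    finally show ?thesis by (simp add: sum_distrib_right[symmetric]) (metis mult.commute times_divide_eq_right)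
  qed
  moreover have "(\<Sum>p\<le>l. if p \<le> j then c p * ((y * v)^(j-p) / of_real (fact (j-p))) else 0) = TT x y l j * v^j / of_real (sqrt (fact j))" for j
  proof -
    have "(\<Sum>p\<le>l. if p \<le> j then c p * ((y * v)^(j-p) / of_real (fact (j-p))) else 0)
        = (\<Sum>p\<le>min l j. c p * ((y * v)^(j-p) / of_real (fact (j-p))))"
      by (rule sum.mono_neutral_cong_right) auto
    also have "\<dots> = (\<Sum>p\<le>min l j. of_real (kap l j p) * x^(l-p) * y^(j-p) * v^j / of_real (sqrt (fact j)))"
    proof (rule sum.cong[OF refl])
      fix p assume "p \<in> {..min l j}"
      hence pj: "p \<le> j" by simp
      have vv: "v^j = v^p * v^(j-p)" using pj by (simp add: power_add[symmetric])
      have kk: "kap l j p / sqrt (fact j) = sqrt (fact l) / (fact (l-p) * fact p) / fact (j-p)"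
        unfolding kap_def by (simp add: real_sqrt_mult field_simps)
      have "of_real (kap l j p) * x^(l-p) * y^(j-p) * v^j / of_real (sqrt (fact j))
         = of_real (kap l j p / sqrt (fact j)) * x^(l-p) * y^(j-p) * v^j" 
        by (simp add: field_simps)
      also have "\<dots> = of_real (sqrt (fact l) / (fact (l-p) * fact p) / fact (j-p)) * x^(l-p) * y^(j-p) * (v^p * v^(j-p))"
        by (simp only: kk vv)
      also have "\<dots> = c p * ((y * v)^(j-p) / of_real (fact (j-p)))"
        unfolding c_def by (simp add: field_simps power_mult_distrib)
      finally show "c p * ((y * v)^(j-p) / of_real (fact (j-p))) = of_real (kap l j p) * x^(l-p) * y^(j-p) * v^j / of_real (sqrt (fact j))" by simp
    qed
    also have "\<dots> = TT x y l j * v^j / of_real (sqrt (fact j))"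
      unfolding TT_def by (simp add: sum_distrib_right sum_divide_distrib)
    finally show ?thesis .
  qed
  ultimately show ?thesis by simp
qed


lemma powser_zero_unique:
  fixes c :: "nat \<Rightarrow> complex"
  assumes h: "\<And>z. (\<lambda>n. c n * z^n) sums 0"
  shows "c n = 0"
proof (induction n rule: less_induct)
  case (less n)
  have sh: "(\<lambda>m. c (m + n) * z^m) sums 0" if z: "z \<noteq> 0" for z
  proof -
    have "(\<lambda>i. c (i + n) * z^(i + n)) sums 0"
      using h[of z] less by (subst sums_iff_shift) simp
    hence "(\<lambda>i. c (i + n) * z^(i + n) / z^n) sums (0 / z^n)"
      by (rule sums_divide)
    thus ?thesis using z by (simp add: power_add)
  qed
  have "((\<lambda>z::complex. 0::complex) \<longlongrightarrow> c (0 + n)) (at 0)"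
    using powser_limit_0_strong[of 1 "\<lambda>m. c (m+n)" "\<lambda>z. 0"] sh by auto
  thus ?case by (simp add: tendsto_const_iff)
qed

lemma powser_unique:
  fixes a b :: "nat \<Rightarrow> complex"
  assumes "\<And>z. (\<lambda>n. a n * z^n) sums f z" "\<And>z. (\<lambda>n. b n * z^n) sums f z"
  shows "a = b"
proof
  fix n
  have "(\<lambda>n. (a n - b n) * z^n) sums 0" for z
    using sums_diff[OF assms(1)[of z] assms(2)[of z]] by (simp add: algebra_simps)
  from powser_zero_unique[OF this] show "a n = b n" by simp
qed

definition WW :: "complex \<Rightarrow> nat \<Rightarrow> nat \<Rightarrow> complex" where
  "WW u l j = of_real (exp (- (cmod u)\<^sup>2 / 2)) * TT u (- cnj u) l j"

lemma WW_gen: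
  "(\<lambda>m. WW u k m * v ^ m / complex_of_real (sqrt (fact m))) sums
      (exp (- complex_of_real ((cmod u)\<^sup>2 / 2) - cnj u * v) * (u + v) ^ k
         / complex_of_real (sqrt (fact k)))"
proof -
  have "(\<lambda>m. of_real (exp (- (cmod u)\<^sup>2 / 2)) * (TT u (- cnj u) k m * v ^ m / complex_of_real (sqrt (fact m)))) sums
     (of_real (exp (- (cmod u)\<^sup>2 / 2)) * (exp ((- cnj u) * v) * (u + v) ^ k / complex_of_real (sqrt (fact k))))"
    by (intro sums_mult TT_gen)
  moreover have "exp (- complex_of_real ((cmod u)\<^sup>2 / 2) - cnj u * v) = of_real (exp (- (cmod u)\<^sup>2 / 2)) * exp ((- cnj u) * v)"
    by (simp only: exp_of_real[symmetric] mult_exp_exp) simp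
  ultimately show ?thesis unfolding WW_def by (simp add: mult.assoc)
qed

lemma weyl_elem_eq: "weyl_elem u = WW u"
  unfolding weyl_elem_def
proof (rule the_equality)
  show "\<forall>k v. (\<lambda>m. WW u k m * v ^ m / complex_of_real (sqrt (fact m))) sums
      (exp (- complex_of_real ((cmod u)\<^sup>2 / 2) - cnj u * v) * (u + v) ^ k
         / complex_of_real (sqrt (fact k)))" using WW_gen by blast
next
  fix w assume w: "\<forall>k v. (\<lambda>m. w k m * v ^ m / complex_of_real (sqrt (fact m))) sums
      (exp (- complex_of_real ((cmod u)\<^sup>2 / 2) - cnj u * v) * (u + v) ^ k
         / complex_of_real (sqrt (fact k)))"
  show "w = WW u"
  proof (rule ext)
    fix k
    have "(\<lambda>m. w k m / complex_of_real (sqrt (fact m))) = (\<lambda>m. WW u k m / complex_of_real (sqrt (fact m)))"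
    proof (rule powser_unique[where f = "\<lambda>v. exp (- complex_of_real ((cmod u)\<^sup>2 / 2) - cnj u * v) * (u + v) ^ k
         / complex_of_real (sqrt (fact k))"])
      fix z
      have e1: "(\<lambda>m. w k m / complex_of_real (sqrt (fact m)) * z^m) = (\<lambda>m. w k m * z ^ m / complex_of_real (sqrt (fact m)))"
        by (auto simp: fun_eq_iff)
      have e2: "(\<lambda>m. WW u k m / complex_of_real (sqrt (fact m)) * z^m) = (\<lambda>m. WW u k m * z ^ m / complex_of_real (sqrt (fact m)))"
        by (auto simp: fun_eq_iff)
      show "(\<lambda>m. w k m / complex_of_real (sqrt (fact m)) * z^m) sums (exp (- complex_of_real ((cmod u)\<^sup>2 / 2) - cnj u * z) * (u + z) ^ k
         / complex_of_real (sqrt (fact k)))"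
        unfolding e1 using w by blast
      show "(\<lambda>m. WW u k m / complex_of_real (sqrt (fact m)) * z^m) sums (exp (- complex_of_real ((cmod u)\<^sup>2 / 2) - cnj u * z) * (u + z) ^ k
         / complex_of_real (sqrt (fact k)))"
        unfolding e2 by (rule WW_gen)
    qed
    hence "w k m = WW u k m" for m
      by (metis (no_types) fun_cong nonzero_divide_eq_eq of_real_eq_0_iff real_sqrt_eq_zero_cancel_iff fact_nonzero of_nat_eq_0_iff of_nat_fact)
    thus "w k = WW u k" by auto
  qed
qed


lemma kap_sym: "kap l j p = kap j l p"
  unfolding kap_def by (simp add: mult.commute mult.left_commute)

lemma kap_nonneg: "kap l j p \<ge> 0"
  unfolding kap_def by simp

lemma TT_sym: "TT x y l j = TT y x j l"
  unfolding TT_def by (simp add: kap_sym min.commute mult.commute mult.left_commute)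

lemma WW_adj: "WW u l i = cnj (WW (-u) i l)"
  unfolding WW_def TT_def
  by (simp add: cnj_sum kap_sym min.commute mult.commute mult.left_commute)

lemma norm_TT: "cmod (TT x y l j) \<le> TT (cmod x) (cmod y) l j"
  unfolding TT_def
  by (rule order_trans[OF norm_sum]) (simp add: norm_mult norm_power abs_of_nonneg kap_nonneg)

lemma TT_real_nonneg: "a \<ge> 0 \<Longrightarrow> b \<ge> 0 \<Longrightarrow> TT (a::real) b l j \<ge> 0"
  unfolding TT_def by (intro sum_nonneg) (simp add: kap_nonneg)

definition BB :: "complex \<Rightarrow> real \<Rightarrow> nat \<Rightarrow> real" where
  "BB u t l = exp (- (cmod u)\<^sup>2 / 2) * (exp (cmod u * t) * (cmod u + t)^l / sqrt (fact l))"

lemma norm_WW: "cmod (WW u l j) \<le> exp (- (cmod u)\<^sup>2 / 2) * TT (cmod u) (cmod u) l j"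
  unfolding WW_def using norm_TT[of u "- cnj u" l j] by (simp add: norm_mult)

lemma WW_row_sums_real:
  "(\<lambda>j. exp (- (cmod u)\<^sup>2 / 2) * TT (cmod u) (cmod u) l j * t^j / sqrt (fact j)) sums BB u t l"
  unfolding BB_def using sums_mult[OF TT_gen[of "cmod u" "cmod u" l t], of "exp (- (cmod u)\<^sup>2 / 2)"]
  by (simp add: mult.assoc)

lemma WW_row_summ:
  assumes t: "t \<ge> 0"
  shows "summable (\<lambda>j. cmod (WW u l j) * t^j / sqrt (fact j))"
    and "(\<Sum>j. cmod (WW u l j) * t^j / sqrt (fact j)) \<le> BB u t l"
proof -
  have le: "cmod (WW u l j) * t^j / sqrt (fact j) \<le> exp (- (cmod u)\<^sup>2 / 2) * TT (cmod u) (cmod u) l j * t^j / sqrt (fact j)" for j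
    using norm_WW[of u l j] t by (intro divide_right_mono mult_right_mono) auto
  show s: "summable (\<lambda>j. cmod (WW u l j) * t^j / sqrt (fact j))"
    by (rule summable_comparison_test[OF _ sums_summable[OF WW_row_sums_real]]) (use le t in auto)
  show "(\<Sum>j. cmod (WW u l j) * t^j / sqrt (fact j)) \<le> BB u t l"
    using suminf_le[OF le s sums_summable[OF WW_row_sums_real]] sums_unique[OF WW_row_sums_real] by simp
qed

lemma WW_col_summ:
  assumes t: "t \<ge> 0"
  shows "summable (\<lambda>l. cmod (WW u l j) * t^l / sqrt (fact l))"
    and "(\<Sum>l. cmod (WW u l j) * t^l / sqrt (fact l)) \<le> BB u t j"
proof -
  have eq: "cmod (WW u l j) = cmod (WW (-u) j l)" for l
    by (subst WW_adj) simp
  show "summable (\<lambda>l. cmod (WW u l j) * t^l / sqrt (fact l))"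
    using WW_row_summ(1)[OF t, of "-u" j] unfolding eq .
  show "(\<Sum>l. cmod (WW u l j) * t^l / sqrt (fact l)) \<le> BB u t j"
    using WW_row_summ(2)[OF t, of "-u" j] unfolding eq by (simp add: BB_def)
qed


abbreviation csf :: "nat \<Rightarrow> complex" where "csf j \<equiv> complex_of_real (sqrt (fact j))"

lemma infsum_nat_complex:
  fixes f :: "nat \<Rightarrow> complex"
  assumes "summable (\<lambda>n. norm (f n))" "f sums s"
  shows "(f has_sum s) UNIV" "infsum f UNIV = s"
  using norm_summable_imp_has_sum[OF assms] infsumI by auto

lemma slice_summable:
  fixes f :: "'a \<Rightarrow> 'b \<Rightarrow> 'c::banach"
  assumes "(\<lambda>(x,y). f x y) summable_on (UNIV \<times> UNIV)"
  shows "f x summable_on UNIV"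
proof -
  from assms have "(\<lambda>(x,y). f x y) summable_on (Pair x ` UNIV)"
    by (rule summable_on_subset_banach) auto
  then have "((\<lambda>(x,y). f x y) \<circ> Pair x) summable_on UNIV"
    by (metis summable_on_reindex inj_on_def prod.inject)
  then show ?thesis by (auto simp: o_def)
qed

definition FF :: "complex \<Rightarrow> nat \<Rightarrow> complex \<Rightarrow> complex \<Rightarrow> nat \<times> nat \<Rightarrow> complex" where
  "FF u1 i u2 v = (\<lambda>(l,j). cnj (WW u1 l i) * (WW u2 l j * v^j / csf j))"

lemma abs_F:
  "(\<lambda>x. norm (FF u1 i u2 v x)) summable_on (UNIV \<times> UNIV)"
proof -
  define F where "F = FF u1 i u2 v"
  have nF: "norm (F (l,j)) = cmod (WW u1 l i) * (cmod (WW u2 l j) * cmod v ^ j / sqrt (fact j))" for l j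
    unfolding F_def FF_def by (simp add: norm_mult norm_divide norm_power)
  have "(\<lambda>x. norm (F x)) summable_on Sigma UNIV (\<lambda>_. UNIV)"
  proof (rule iffD2[OF Infinite_Sum.abs_summable_on_Sigma_iff], intro conjI ballI)
    fix l :: nat
    show "(\<lambda>j. norm (F (l, j))) summable_on UNIV"
      unfolding nF using summable_mult[OF WW_row_summ(1)[of "cmod v" u2 l], of "cmod (WW u1 l i)"]
      by (subst summable_on_UNIV_nonneg_real_iff) auto
  next
    define K where "K = exp (- (cmod u2)\<^sup>2 / 2) * exp (cmod u2 * cmod v)"
    have K: "K \<ge> 0" unfolding K_def by simp
    have eq: "infsum (\<lambda>j. norm (F (l, j))) UNIV = cmod (WW u1 l i) * (\<Sum>j. cmod (WW u2 l j) * cmod v ^ j / sqrt (fact j))" for l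
    proof -
      have sm: "(\<lambda>j. cmod (WW u1 l i) * (cmod (WW u2 l j) * cmod v ^ j / sqrt (fact j))) sums
           (cmod (WW u1 l i) * (\<Sum>j. cmod (WW u2 l j) * cmod v ^ j / sqrt (fact j)))"
        by (rule sums_mult[OF summable_sums[OF WW_row_summ(1)[of "cmod v" u2 l]]]) simp
      have nn: "norm (cmod (WW u1 l i) * (cmod (WW u2 l j) * cmod v ^ j / sqrt (fact j))) = cmod (WW u1 l i) * (cmod (WW u2 l j) * cmod v ^ j / sqrt (fact j))" for j
        by (simp add: abs_mult)
      have "summable (\<lambda>j. norm (cmod (WW u1 l i) * (cmod (WW u2 l j) * cmod v ^ j / sqrt (fact j))))"
        unfolding nn by (rule sums_summable[OF sm])
      from infsumI[OF norm_summable_imp_has_sum[OF this sm]] show ?thesis unfolding nF .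
    qed
    have le: "norm (infsum (\<lambda>j. norm (F (l, j))) UNIV) \<le> K * (cmod (WW u1 l i) * (cmod u2 + cmod v)^l / sqrt (fact l))" for l
    proof -
      have "norm (infsum (\<lambda>j. norm (F (l, j))) UNIV) = cmod (WW u1 l i) * (\<Sum>j. cmod (WW u2 l j) * cmod v ^ j / sqrt (fact j))"
        unfolding eq using WW_row_summ(1)[of "cmod v" u2 l]
        by (simp add: suminf_nonneg)
      also have "\<dots> \<le> cmod (WW u1 l i) * BB u2 (cmod v) l"
        by (intro mult_left_mono WW_row_summ(2)) auto
      also have "\<dots> = K * (cmod (WW u1 l i) * (cmod u2 + cmod v)^l / sqrt (fact l))"
        unfolding BB_def K_def by simp
      finally show ?thesis .
    qed
    have "summable (\<lambda>l. K * (cmod (WW u1 l i) * (cmod u2 + cmod v)^l / sqrt (fact l)))"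
      using WW_col_summ(1)[of "cmod u2 + cmod v" u1 i] by (intro summable_mult) auto
    hence "summable (\<lambda>l. norm (infsum (\<lambda>j. norm (F (l, j))) UNIV))"
      by (rule summable_comparison_test[rotated]) (use le in auto)
    thus "(\<lambda>l. norm (infsum (\<lambda>j. norm (F (l, j))) UNIV)) summable_on UNIV"
      by (subst summable_on_UNIV_nonneg_real_iff) auto
  qed
  thus ?thesis unfolding F_def by simp
qed

definition cc :: "complex \<Rightarrow> complex \<Rightarrow> complex" where
  "cc u v = exp (- complex_of_real ((cmod u)\<^sup>2 / 2) - cnj u * v)"

lemma WW_gen': "(\<lambda>m. WW u k m * v ^ m / csf m) sums (cc u v * (u + v) ^ k / csf k)"
  using WW_gen unfolding cc_def .

lemma ip_gen:
  "(\<lambda>j. ip (\<lambda>l. WW u1 l i) (\<lambda>l. WW u2 l j) * v^j / csf j) sums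
     (cc u2 v * (cc (-u1) (u2 + v) * (-u1 + (u2 + v))^i / csf i))"
proof -
  define F where "F = (\<lambda>l j. cnj (WW u1 l i) * (WW u2 l j * v^j / csf j))"
  have sF: "(\<lambda>(l,j). F l j) summable_on (UNIV \<times> UNIV)"
    using abs_summable_summable[OF abs_F[of u1 i u2 v]] unfolding F_def FF_def by (simp add: case_prod_unfold)
  define H where "H = (\<lambda>j l. F l j)"
  have sH: "(\<lambda>(j,l). H j l) summable_on (UNIV \<times> UNIV)"
    using sF unfolding H_def by (subst summable_on_swap) (simp add: case_prod_unfold)
  have colsum: "(\<lambda>l. cnj (WW u1 l i) * WW u2 l j) summable_on UNIV" for j
  proof -
    have s1: "(\<lambda>(l,j). cnj (WW u1 l i) * (WW u2 l j * 1^j / csf j)) summable_on (UNIV \<times> UNIV)"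
      using abs_summable_summable[OF abs_F[of u1 i u2 1]] unfolding FF_def by (simp add: case_prod_unfold)
    have "(\<lambda>l. cnj (WW u1 l i) * (WW u2 l j * 1^j / csf j)) summable_on UNIV"
      using slice_summable[of "\<lambda>j l. cnj (WW u1 l i) * (WW u2 l j * 1^j / csf j)", of j] s1
      by (subst (asm) summable_on_swap) (simp add: case_prod_unfold)
    hence "(\<lambda>l. cnj (WW u1 l i) * WW u2 l j * (1 / csf j)) summable_on UNIV"
      by (simp add: mult.assoc)
    thus ?thesis by (subst (asm) summable_on_cmult_left') auto
  qed
  have col: "infsum (\<lambda>l. H j l) UNIV = ip (\<lambda>l. WW u1 l i) (\<lambda>l. WW u2 l j) * v^j / csf j" for j
  proof -
    have "infsum (\<lambda>l. H j l) UNIV = infsum (\<lambda>l. cnj (WW u1 l i) * WW u2 l j * (v^j / csf j)) UNIV"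
      unfolding H_def F_def by (simp add: mult.assoc)
    also have "\<dots> = infsum (\<lambda>l. cnj (WW u1 l i) * WW u2 l j) UNIV * (v^j / csf j)"
      by (rule infsum_cmult_left) (use colsum in auto)
    finally show ?thesis unfolding ip_def by simp
  qed
  have row: "infsum (\<lambda>j. F l j) UNIV = cc u2 v * (WW (-u1) i l * (u2 + v)^l / csf l)" for l
  proof -
    have "infsum (\<lambda>j. WW u2 l j * v^j / csf j) UNIV = cc u2 v * (u2 + v) ^ l / csf l"
      by (rule infsum_nat_complex(2)[OF _ WW_gen'])
        (use WW_row_summ(1)[of "cmod v" u2 l] in \<open>simp add: norm_mult norm_divide norm_power\<close>)
    hence "infsum (\<lambda>j. F l j) UNIV = cnj (WW u1 l i) * (cc u2 v * (u2 + v) ^ l / csf l)"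
      unfolding F_def by (subst infsum_cmult_right') simp
    moreover have "cnj (WW u1 l i) = WW (-u1) i l"
      by (subst WW_adj) simp
    ultimately show ?thesis by simp
  qed
  have last: "infsum (\<lambda>l. WW (-u1) i l * (u2 + v)^l / csf l) UNIV = cc (-u1) (u2 + v) * (-u1 + (u2 + v))^i / csf i"
    by (rule infsum_nat_complex(2)[OF _ WW_gen'])
      (use WW_row_summ(1)[of "cmod (u2 + v)" "-u1" i] in \<open>simp add: norm_mult norm_divide norm_power\<close>)
  have "infsum (\<lambda>j. infsum (\<lambda>l. H j l) UNIV) UNIV = infsum (\<lambda>l. infsum (\<lambda>j. H j l) UNIV) UNIV"
    by (rule infsum_swap_banach[OF sH])
  also have "\<dots> = infsum (\<lambda>l. cc u2 v * (WW (-u1) i l * (u2 + v)^l / csf l)) UNIV"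
    unfolding H_def row ..
  also have "\<dots> = cc u2 v * (cc (-u1) (u2 + v) * (-u1 + (u2 + v))^i / csf i)"
    by (subst infsum_cmult_right') (simp add: last)
  finally have val: "infsum (\<lambda>j. ip (\<lambda>l. WW u1 l i) (\<lambda>l. WW u2 l j) * v^j / csf j) UNIV = cc u2 v * (cc (-u1) (u2 + v) * (-u1 + (u2 + v))^i / csf i)"
    unfolding col .
  have "(\<lambda>j. infsum (\<lambda>l. H j l) UNIV) summable_on UNIV"
    using summable_on_Sigma_banach[OF sH] by (simp add: case_prod_unfold)
  hence "(\<lambda>j. ip (\<lambda>l. WW u1 l i) (\<lambda>l. WW u2 l j) * v^j / csf j) summable_on UNIV"
    unfolding col .
  from has_sum_imp_sums[OF this[unfolded summable_iff_has_sum_infsum, unfolded val]]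
  show ?thesis .
qed

definition th :: "complex \<Rightarrow> complex \<Rightarrow> complex" where
  "th u1 u2 = exp (- complex_of_real ((cmod u1)\<^sup>2 / 2) - complex_of_real ((cmod u2)\<^sup>2 / 2)
                 + complex_of_real ((cmod (u2 - u1))\<^sup>2 / 2) + cnj u1 * u2)"

lemma ip_WW: "ip (\<lambda>l. WW u1 l i) (\<lambda>l. WW u2 l j) = th u1 u2 * WW (u2 - u1) i j"
proof -
  have eq: "(\<lambda>j. ip (\<lambda>l. WW u1 l i) (\<lambda>l. WW u2 l j) / csf j) = (\<lambda>j. th u1 u2 * WW (u2 - u1) i j / csf j)"
  proof (rule powser_unique[where f = "\<lambda>v. cc u2 v * (cc (-u1) (u2 + v) * (-u1 + (u2 + v))^i / csf i)"])
    fix z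
    show "(\<lambda>n. ip (\<lambda>l. WW u1 l i) (\<lambda>l. WW u2 l n) / csf n * z ^ n) sums (cc u2 z * (cc (-u1) (u2 + z) * (-u1 + (u2 + z))^i / csf i))"
      using ip_gen[of u1 i u2 z] by (simp add: field_simps)
    have "(\<lambda>n. th u1 u2 * (WW (u2 - u1) i n * z ^ n / csf n)) sums (th u1 u2 * (cc (u2 - u1) z * (u2 - u1 + z) ^ i / csf i))"
      by (intro sums_mult WW_gen')
    moreover have "th u1 u2 * cc (u2 - u1) z = cc u2 z * cc (-u1) (u2 + z)"
      unfolding th_def cc_def by (simp add: mult_exp_exp algebra_simps)
    moreover have "th u1 u2 * (cc (u2 - u1) z * (u2 - u1 + z) ^ i / csf i) = cc u2 z * (cc (-u1) (u2 + z) * (-u1 + (u2 + z))^i / csf i)"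
      using calculation(2) by (simp add: mult.assoc[symmetric]) (simp add: algebra_simps)
    moreover have "(\<lambda>n. th u1 u2 * (WW (u2 - u1) i n * z ^ n / csf n)) = (\<lambda>n. th u1 u2 * WW (u2 - u1) i n / csf n * z ^ n)"
      by (rule ext) simp
    ultimately show "(\<lambda>n. th u1 u2 * WW (u2 - u1) i n / csf n * z ^ n) sums (cc u2 z * (cc (-u1) (u2 + z) * (-u1 + (u2 + z))^i / csf i))"
      by metis
  qed
  have "csf j \<noteq> 0" by simp
  with fun_cong[OF eq, of j] show ?thesis by (simp add: field_simps)
qed


lemma colsum:
  "(\<lambda>l. cnj (WW u1 l i) * WW u2 l j) summable_on UNIV"
proof -
  have s1: "(\<lambda>(l,j). cnj (WW u1 l i) * (WW u2 l j * 1^j / csf j)) summable_on (UNIV \<times> UNIV)"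
    using abs_summable_summable[OF abs_F[of u1 i u2 1]] unfolding FF_def by (simp add: case_prod_unfold)
  have "(\<lambda>l. cnj (WW u1 l i) * (WW u2 l j * 1^j / csf j)) summable_on UNIV"
    using slice_summable[of "\<lambda>j l. cnj (WW u1 l i) * (WW u2 l j * 1^j / csf j)", of j] s1
    by (subst (asm) summable_on_swap) (simp add: case_prod_unfold)
  hence "(\<lambda>l. cnj (WW u1 l i) * WW u2 l j * (1 / csf j)) summable_on UNIV"
    by (simp add: mult.assoc)
  thus ?thesis by (subst (asm) summable_on_cmult_left') auto
qed

lemma abs_colsum:
  "(\<lambda>l. norm (cnj (WW u1 l i) * WW u2 l j)) summable_on UNIV"
proof -
  have s1: "(\<lambda>x. norm (FF u1 i u2 1 x)) summable_on (UNIV \<times> UNIV)"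
    by (rule abs_F)
  have "(\<lambda>l. norm (FF u1 i u2 1 (l, j))) summable_on UNIV"
    using slice_summable[of "\<lambda>j l. norm (FF u1 i u2 1 (l, j))", of j] s1
    by (subst (asm) summable_on_swap) (simp add: case_prod_unfold)
  hence "(\<lambda>l. norm (cnj (WW u1 l i) * WW u2 l j) * (1 / sqrt (fact j))) summable_on UNIV"
    unfolding FF_def by (simp add: norm_mult norm_divide)
  thus ?thesis by (subst (asm) summable_on_cmult_left') auto
qed

lemma TT00: "TT (0::complex) 0 a b = (if a = b then 1 else 0)"
proof -
  have "TT (0::complex) 0 a b = (\<Sum>p\<le>min a b. if p = a \<and> p = b then of_real (kap a b p) else 0)"
    unfolding TT_def by (rule sum.cong) (auto simp: power_0_left)
  also have "\<dots> = (if a = b then 1 else 0)"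
    by (cases "a = b") (auto simp: kap_def intro!: sum.neutral)
  finally show ?thesis .
qed

lemma th_self: "th u u = 1"
proof -
  have "cnj u * u = complex_of_real ((cmod u)\<^sup>2)"
    by (subst complex_norm_square) (simp add: mult.commute)
  thus ?thesis unfolding th_def by (simp add: field_simps)
qed

lemma col_norm: "((\<lambda>l. (cmod (WW u l j))\<^sup>2) has_sum 1) UNIV"
proof -
  have "ip (\<lambda>l. WW u l j) (\<lambda>l. WW u l j) = 1"
    by (simp only: ip_WW) (simp add: th_self WW_def TT00)
  hence "((\<lambda>l. cnj (WW u l j) * WW u l j) has_sum 1) UNIV"
    using colsum[of u j u j] unfolding ip_def by (metis has_sum_infsum)
  from has_sum_Re[OF this] show ?thesis
    by (simp add: complex_norm_square[symmetric] mult.commute)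
qed

lemma TT_neg: "TT (-x) (cnj x) j i = (-1)^(i+j) * TT x (- cnj x) j i"
  unfolding TT_def sum_distrib_left
proof (rule sum.cong[OF refl])
  fix p assume "p \<in> {..min j i}"
  hence p: "p \<le> j" "p \<le> i" by auto
  have e: "i + j + (i - p) = (j - p) + 2 * i" using p by simp
  have "(-1::complex)^(i+j) * (-1)^(i-p) = (-1)^(j-p)"
    by (simp add: power_add[symmetric] e power_mult) (simp add: power_add power_mult)
  thus "of_real (kap j i p) * (- x) ^ (j - p) * cnj x ^ (i - p) =
        (-1) ^ (i + j) * (of_real (kap j i p) * x ^ (j - p) * (- cnj x) ^ (i - p))"
    by (simp add: power_minus[of x] power_minus[of "cnj x"] algebra_simps)
qed

lemma WW_sym: "cmod (WW u i j) = cmod (WW u j i)"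
proof -
  have "cmod (WW u i j) = cmod (WW (-u) j i)" by (subst WW_adj) simp
  also have "\<dots> = cmod (WW u j i)"
    unfolding WW_def by (simp add: TT_neg norm_mult norm_power)
  finally show ?thesis .
qed

lemma upper_not_summable:
  "\<not> ((\<lambda>(a,b). (cmod (WW u a b))\<^sup>2) summable_on {(a,b). a \<le> b})"
proof
  define h where "h = (\<lambda>(a::nat,b::nat). (cmod (WW u a b))\<^sup>2)"
  assume "(\<lambda>(a,b). (cmod (WW u a b))\<^sup>2) summable_on {(a,b). a \<le> b}"
  hence U: "h summable_on {(a,b). a \<le> b}" unfolding h_def .
  have hs: "h \<circ> prod.swap = h" unfolding h_def by (auto simp: fun_eq_iff WW_sym)
  have "(h \<circ> prod.swap) summable_on {(a,b). a \<le> b}" using U hs by simp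
  hence "h summable_on prod.swap ` {(a,b). a \<le> b}"
    by (subst summable_on_reindex) auto
  hence L: "h summable_on {(a,b). b < a}"
    by (rule summable_on_subset_banach) (auto simp: image_def)
  have "h summable_on ({(a,b). a \<le> b} \<union> {(a,b). b < a})"
    by (rule summable_on_Un_disjoint[OF U L]) auto
  moreover have "{(a::nat,b::nat). a \<le> b} \<union> {(a,b). b < a} = UNIV" by auto
  ultimately have "h summable_on UNIV" by simp
  hence "(\<lambda>(b,a). h (a,b)) summable_on (UNIV \<times> UNIV)"
    using summable_on_swap[of h UNIV UNIV] by simp
  hence "(\<lambda>b. infsum (\<lambda>a. h (a,b)) UNIV) summable_on UNIV"
    using summable_on_Sigma_banach[of "\<lambda>b a. h (a,b)" UNIV "\<lambda>_. UNIV"] by simp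
  moreover have "infsum (\<lambda>a. h (a,b)) UNIV = 1" for b
    unfolding h_def using col_norm[of u b] by (simp add: infsumI)
  ultimately have "(\<lambda>b::nat. 1::real) summable_on UNIV" by simp
  hence "summable (\<lambda>b::nat. 1::real)"
    by (subst (asm) summable_on_UNIV_nonneg_real_iff) auto
  thus False by (simp add: summable_const_iff)
qed


lemma ip_multi:
  fixes u1 u2 :: "'n::finite \<Rightarrow> complex"
  shows "ip (displaced_basis u1 i) (displaced_basis u2 j) =
         (\<Prod>m\<in>UNIV. th (u1 m) (u2 m) * WW (u2 m - u1 m) (i m) (j m))"
proof -
  have "ip (displaced_basis u1 i) (displaced_basis u2 j) =
     infsum (\<lambda>l. \<Prod>m\<in>UNIV. cnj (WW (u1 m) (l m) (i m)) * WW (u2 m) (l m) (j m)) UNIV"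
    unfolding ip_def displaced_basis_def weyl_elem_eq by (simp add: cnj_prod prod.distrib)
  also have "\<dots> = infsum (\<lambda>l. \<Prod>m\<in>UNIV. cnj (WW (u1 m) (l m) (i m)) * WW (u2 m) (l m) (j m)) (PiE UNIV (\<lambda>_. UNIV))"
    by simp
  also have "\<dots> = (\<Prod>m\<in>UNIV. infsum (\<lambda>x. cnj (WW (u1 m) x (i m)) * WW (u2 m) x (j m)) UNIV)"
    by (rule infsum_prod_PiE_abs[of UNIV "\<lambda>m x. cnj (WW (u1 m) x (i m)) * WW (u2 m) x (j m)" "\<lambda>_. UNIV"])
      (auto intro: abs_colsum)
  also have "\<dots> = (\<Prod>m\<in>UNIV. th (u1 m) (u2 m) * WW (u2 m - u1 m) (i m) (j m))"
    using ip_WW unfolding ip_def by simp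
  finally show ?thesis .
qed

lemma thermal_e:
  fixes r :: "'n::finite \<Rightarrow> real"
  shows "thermal_eig r (\<lambda>m. if m = j0 then a else 0) = (\<Prod>m\<in>UNIV. (1 - exp (- r m))) * exp (- real a * r j0)"
proof -
  have "(\<Prod>m\<in>UNIV. exp (- real (if m = j0 then a else 0) * r m)) = exp (\<Sum>m\<in>UNIV. - real (if m = j0 then a else 0) * r m)"
    by (simp add: exp_sum)
  also have "(\<Sum>m\<in>UNIV. - real (if m = j0 then a else 0) * r m) = (\<Sum>m\<in>UNIV. if m = j0 then - real a * r j0 else 0)"
    by (rule sum.cong) auto
  also have "\<dots> = - real a * r j0" by simp
  finally show ?thesis unfolding thermal_eig_def prod.distrib by simp
qed

lemma thermal_pos:
  fixes r :: "'n::finite \<Rightarrow> real"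
  assumes "\<forall>j. 0 < r j"
  shows "thermal_eig r k > 0"
  unfolding thermal_eig_def using assms by (intro prod_pos) auto

lemma P0_pos:
  fixes r :: "'n::finite \<Rightarrow> real"
  assumes "\<forall>j. 0 < r j"
  shows "(\<Prod>m\<in>UNIV. (1 - exp (- r m))) > 0"
  using assms by (intro prod_pos) auto


lemma renyi_top:
  fixes r s :: "'n::finite \<Rightarrow> real" and u1 u2 :: "'n \<Rightarrow> complex" and \<alpha> :: real
  assumes r: "\<forall>j. 0 < r j" and s: "\<forall>j. 0 < s j" and al: "\<alpha> > 1"
    and j0: "\<alpha> * r j0 \<le> (\<alpha> - 1) * s j0"
  shows "renyi_div \<alpha> (thermal_eig r) (displaced_basis u1) (thermal_eig s) (displaced_basis u2) = \<infinity>"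
proof -
  define f where "f = (\<lambda>(i,j). thermal_eig r i powr \<alpha> * thermal_eig s j powr (1-\<alpha>)
       * (cmod (ip (displaced_basis u1 i) (displaced_basis u2 j)))\<^sup>2)"
  have f_nonneg: "f x \<ge> 0" for x unfolding f_def by (auto simp: case_prod_unfold)
  have terms: "(\<lambda>(i,j). ennreal (thermal_eig r i powr \<alpha>) * neg_pow_term \<alpha> (thermal_eig s j)
        * ennreal ((cmod (ip (displaced_basis u1 i) (displaced_basis u2 j)))\<^sup>2)) = (\<lambda>x. ennreal (f x))"
  proof (rule ext, clarify)
    fix i j
    have "thermal_eig s j \<noteq> 0" using thermal_pos[OF s] by (metis less_irrefl)
    thus "ennreal (thermal_eig r i powr \<alpha>) * neg_pow_term \<alpha> (thermal_eig s j)
        * ennreal ((cmod (ip (displaced_basis u1 i) (displaced_basis u2 j)))\<^sup>2) = ennreal (f (i, j))"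
      unfolding f_def neg_pow_term_def by (simp add: ennreal_mult)
  qed
  define S where "S = infsum (\<lambda>x. ennreal (f x)) UNIV"
  have "S = top"
  proof (rule ccontr)
    assume St: "S \<noteq> top"
    have fsum: "f summable_on UNIV"
    proof (rule nonneg_bdd_above_summable_on)
      show "bdd_above (sum f ` {F. F \<subseteq> UNIV \<and> finite F})"
      proof (rule bdd_aboveI2)
        fix F :: "(('n \<Rightarrow> nat) \<times> ('n \<Rightarrow> nat)) set" assume "F \<in> {F. F \<subseteq> UNIV \<and> finite F}"
        hence F: "finite F" by simp
        have "ennreal (sum f F) = infsum (\<lambda>x. ennreal (f x)) F"
          using F f_nonneg by simp
        also have "\<dots> \<le> S" unfolding S_def
          by (rule infsum_mono_neutral) (auto intro: nonneg_summable_on_complete)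
        also have "\<dots> = ennreal (enn2real S)" using St by (simp add: top.not_eq_extremum)
        finally show "sum f F \<le> enn2real S" by (simp add: ennreal_le_iff)
      qed
    qed (use f_nonneg in auto)
    define e where "e a = (\<lambda>m. if m = j0 then a else (0::nat))" for a
    define g where "g = (\<lambda>(a,b). (e a, e b))"
    define U where "U = {(a::nat,b::nat). a \<le> b}"
    have inj: "inj_on g U"
    proof (rule inj_onI, clarify)
      fix a b a' b' assume "g (a,b) = g (a',b')"
      hence "e a j0 = e a' j0" "e b j0 = e b' j0" unfolding g_def by (auto dest: fun_cong)
      thus "a = a' \<and> b = b'" unfolding e_def by simp
    qed
    have "f summable_on g ` U" by (rule summable_on_subset_banach[OF fsum]) simp
    hence fg_sum: "(f \<circ> g) summable_on U" by (subst (asm) summable_on_reindex[OF inj])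
    define W where "W = WW (u2 j0 - u1 j0)"
    define P0 where "P0 = (\<Prod>m\<in>UNIV. (1 - exp (- r m)))"
    define Q0 where "Q0 = (\<Prod>m\<in>UNIV. (1 - exp (- s m)))"
    define K where "K = (\<Prod>m\<in>UNIV - {j0}. (cmod (th (u1 m) (u2 m) * WW (u2 m - u1 m) 0 0))\<^sup>2)"
    define C where "C = P0 powr \<alpha> * Q0 powr (1-\<alpha>) * (cmod (th (u1 j0) (u2 j0)))\<^sup>2 * K"
    have P0: "P0 > 0" unfolding P0_def using P0_pos[OF r] .
    have Q0: "Q0 > 0" unfolding Q0_def using P0_pos[OF s] .
    have th_nz: "th x y \<noteq> 0" for x y unfolding th_def by simp
    have WW00: "WW x 0 0 \<noteq> 0" for x unfolding WW_def TT_def by (simp add: kap_def)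
    have K: "K > 0" unfolding K_def using th_nz WW00 by (intro prod_pos) auto
    have C: "C > 0" unfolding C_def using P0 Q0 K th_nz by simp
    have fg: "(f \<circ> g) (a,b) = C * exp (- \<alpha> * real a * r j0 + (\<alpha> - 1) * real b * s j0) * (cmod (W a b))\<^sup>2" for a b
    proof -
      have ipv: "(cmod (ip (displaced_basis u1 (e a)) (displaced_basis u2 (e b))))\<^sup>2
          = (cmod (th (u1 j0) (u2 j0)))\<^sup>2 * (cmod (W a b))\<^sup>2 * K"
      proof -
        have "(cmod (ip (displaced_basis u1 (e a)) (displaced_basis u2 (e b))))\<^sup>2
          = (\<Prod>m\<in>UNIV. (cmod (th (u1 m) (u2 m) * WW (u2 m - u1 m) (e a m) (e b m)))\<^sup>2)"
          unfolding ip_multi by (simp add: prod_norm[symmetric] prod_power_distrib)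
        also have "\<dots> = (cmod (th (u1 j0) (u2 j0) * WW (u2 j0 - u1 j0) (e a j0) (e b j0)))\<^sup>2 *
             (\<Prod>m\<in>UNIV - {j0}. (cmod (th (u1 m) (u2 m) * WW (u2 m - u1 m) (e a m) (e b m)))\<^sup>2)"
          by (rule prod.remove) auto
        also have "(\<Prod>m\<in>UNIV - {j0}. (cmod (th (u1 m) (u2 m) * WW (u2 m - u1 m) (e a m) (e b m)))\<^sup>2) = K"
          unfolding K_def by (rule prod.cong) (auto simp: e_def)
        finally show ?thesis by (simp add: e_def W_def norm_mult power_mult_distrib)
      qed
      have "(f \<circ> g) (a,b) = (P0 * exp (- real a * r j0)) powr \<alpha> * (Q0 * exp (- real b * s j0)) powr (1-\<alpha>) *
          ((cmod (th (u1 j0) (u2 j0)))\<^sup>2 * (cmod (W a b))\<^sup>2 * K)"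
        unfolding g_def f_def using ipv by (simp add: e_def thermal_e P0_def Q0_def)
      also have "\<dots> = C * exp (- \<alpha> * real a * r j0 + (\<alpha> - 1) * real b * s j0) * (cmod (W a b))\<^sup>2"
        unfolding C_def by (simp add: powr_mult exp_powr_real exp_add[symmetric] algebra_simps)
      finally show ?thesis .
    qed
    have le: "C * (cmod (W a b))\<^sup>2 \<le> (f \<circ> g) (a,b)" if "(a,b) \<in> U" for a b
    proof -
      from that have ab: "real a \<le> real b" unfolding U_def by simp
      have "\<alpha> * real a * r j0 \<le> (\<alpha> - 1) * real a * s j0"
        using mult_left_mono[OF j0, of "real a"] by (simp add: algebra_simps)
      also have "\<dots> \<le> (\<alpha> - 1) * real b * s j0"
        using ab al s by (intro mult_right_mono mult_left_mono) (auto simp: less_imp_le)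
      finally have "1 \<le> exp (- \<alpha> * real a * r j0 + (\<alpha> - 1) * real b * s j0)" by simp
      hence "C * (cmod (W a b))\<^sup>2 * 1 \<le> C * (cmod (W a b))\<^sup>2 * exp (- \<alpha> * real a * r j0 + (\<alpha> - 1) * real b * s j0)"
        using C by (intro mult_left_mono) auto
      thus ?thesis unfolding fg by (simp add: algebra_simps)
    qed
    have "(\<lambda>x. C * (case x of (a,b) \<Rightarrow> (cmod (W a b))\<^sup>2)) summable_on U"
      by (rule summable_on_comparison_test[OF fg_sum]) (use le C in auto)
    hence "(\<lambda>x. case x of (a,b) \<Rightarrow> (cmod (W a b))\<^sup>2) summable_on U"
      using C by (subst (asm) summable_on_cmult_right') auto
    thus False using upper_not_summable[of "u2 j0 - u1 j0"] unfolding U_def W_def by simp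
  qed
  thus ?thesis
    unfolding renyi_div_def Let_def terms S_def[symmetric] by simp
qed


lemma coth_mono:
  assumes "0 < x" "x < y"
  shows "coth y < coth x"
proof -
  have sx: "sinh x > 0" "sinh y > 0" using assms by auto
  have "sinh (y - x) > 0" using assms by simp
  hence "cosh y * sinh x < cosh x * sinh y" by (simp add: sinh_diff algebra_simps)
  thus ?thesis unfolding coth_def using sx by (simp add: divide_simps mult.commute)
qed

theorem theorem3p7:
  fixes r s :: "'n::finite \<Rightarrow> real" and u1 u2 :: "'n \<Rightarrow> complex" and \<alpha> :: real
  assumes "\<forall>j. 0 < r j" and "\<forall>j. 0 < s j" and "\<alpha> > 1"
    and "renyi_div \<alpha> (thermal_eig r) (displaced_basis u1)
                   (thermal_eig s) (displaced_basis u2) < \<infinity>"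
  shows "pos_def (\<lambda>a b. cov_thermal (\<lambda>j. (\<alpha> - 1) * s j) a b
                       - cov_thermal (\<lambda>j. \<alpha> * r j) a b)"
proof -
  have lt: "(\<alpha> - 1) * s j < \<alpha> * r j" for j
  proof (rule ccontr)
    assume "\<not> (\<alpha> - 1) * s j < \<alpha> * r j"
    hence "\<alpha> * r j \<le> (\<alpha> - 1) * s j" by simp
    from renyi_top[OF assms(1-3) this, of u1 u2] assms(4) show False by simp
  qed
  define D where "D = (\<lambda>i::'n \<times> bool. coth ((\<alpha> - 1) * s (fst i) / 2) / 2 - coth (\<alpha> * r (fst i) / 2) / 2)"
  have Dpos: "D i > 0" for i
  proof -
    have "0 < (\<alpha> - 1) * s (fst i) / 2" using assms(2,3) by simp
    moreover have "(\<alpha> - 1) * s (fst i) / 2 < \<alpha> * r (fst i) / 2" using lt[of "fst i"] by simp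
    ultimately have "coth (\<alpha> * r (fst i) / 2) < coth ((\<alpha> - 1) * s (fst i) / 2)" by (rule coth_mono)
    thus ?thesis unfolding D_def by simp
  qed
  have M: "cov_thermal (\<lambda>j. (\<alpha> - 1) * s j) a b - cov_thermal (\<lambda>j. \<alpha> * r j) a b = (if a = b then D a else 0)" for a b
    unfolding cov_thermal_def D_def by (cases a; cases b) auto
  show ?thesis
    unfolding pos_def_def M
  proof (intro allI impI)
    fix x :: "'n \<times> bool \<Rightarrow> real" assume "\<exists>i. x i \<noteq> 0"
    then obtain i0 where i0: "x i0 \<noteq> 0" by blast
    have "(\<Sum>i\<in>UNIV. \<Sum>k\<in>UNIV. x i * (if i = k then D i else 0) * x k) = (\<Sum>i\<in>UNIV. D i * (x i)\<^sup>2)"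
    proof (rule sum.cong[OF refl])
      fix i
      have "x i * (if i = k then D i else 0) * x k = (if k = i then D i * (x i)\<^sup>2 else 0)" for k
        by (auto simp: power2_eq_square)
      thus "(\<Sum>k\<in>UNIV. x i * (if i = k then D i else 0) * x k) = D i * (x i)\<^sup>2" by simp
    qed
    also have "\<dots> > 0"
    proof (rule sum_pos2[of UNIV i0])
      show "0 < D i0 * (x i0)\<^sup>2" using Dpos[of i0] i0 by simp
      show "0 \<le> D i * (x i)\<^sup>2" if "i \<in> UNIV" for i using Dpos[of i] by simp
    qed simp_all
    finally show "0 < (\<Sum>i\<in>UNIV. \<Sum>k\<in>UNIV. x i * (if i = k then D i else 0) * x k)" .
  qed
qed

end
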